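(* Let $S=\sum_{i=1}^r u_i^{\otimes 3}$ be a symmetric tensor in $\mathbb{C}^{n\times n\times n}$, where $u_1,\dots,u_r\in\mathbb{C}^n$ are pairwise orthogonal nonzero vectors. Then the slices of $S$ pairwise commute. Moreover, the following are equivalent: (i) all the $u_i$ are isotropic; (ii) the product of any two (possibly equal) slices of $S$ is the zero matrix. Consequently, if (i) holds, then in any other decomposition $S=\sum_{i=1}^q v_i^{\otimes 3}$ with $v_1,\dots,v_q$ pairwise orthogonal nonzero vectors, all the $v_i$ are isotropic.
   Context: The $k$-th slice of a symmetric tensor $S$ is $S_k=(S_{ijk})_{1\le i,j\le n}$. $\langle x,y\rangle=\sum_i x_iy_i$ on $\mathbb{C}^n$ (bilinear, non-Hermitian); $u,v$ are orthogonal if $\langle u,v\rangle=0$; a nonzero vector $v$ is isotropic if $\langle v,v\rangle=0$. *)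

theory Defs
  imports "HOL-Analysis.Analysis"
begin

text \<open>Bilinear (non-Hermitian) form on C^n.\<close>
definition bil :: "complex ^ 'n \<Rightarrow> complex ^ 'n \<Rightarrow> complex" where
  "bil x y = (\<Sum>i\<in>UNIV. x $ i * y $ i)"

definition isotropic :: "complex ^ 'n \<Rightarrow> bool" where
  "isotropic v \<longleftrightarrow> v \<noteq> 0 \<and> bil v v = 0"

type_synonym 'n tensor3 = "'n \<Rightarrow> 'n \<Rightarrow> 'n \<Rightarrow> complex"

definition cube_sum :: "(complex ^ 'n) list \<Rightarrow> 'n tensor3" where
  "cube_sum us = (\<lambda>i j k. (\<Sum>l<length us. (us ! l) $ i * (us ! l) $ j * (us ! l) $ k))"

definition slice :: "'n tensor3 \<Rightarrow> 'n \<Rightarrow> complex ^ 'n ^ 'n" where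
  "slice S k = (\<chi> i j. S i j k)"

definition pairwise_orth_nonzero :: "(complex ^ 'n) list \<Rightarrow> bool" where
  "pairwise_orth_nonzero us \<longleftrightarrow>
     (\<forall>l<length us. us ! l \<noteq> 0) \<and>
     (\<forall>l<length us. \<forall>m<length us. l \<noteq> m \<longrightarrow> bil (us ! l) (us ! m) = 0)"

end

theory Submission
  imports Defs
begin

lemma bil_sym: "bil x y = bil y x"
  unfolding bil_def by (simp add: mult.commute)

lemma collapse:
  assumes "l < (N::nat)" "\<And>l'. l' < N \<Longrightarrow> l' \<noteq> l \<Longrightarrow> f l' = 0"
  shows "(\<Sum>l'<N. f l') = f l"
proof -
  have "(\<Sum>l'<N. f l') = f l + (\<Sum>l'\<in>{..<N} - {l}. f l')"
    using assms(1) by (simp add: sum.remove)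
  also have "(\<Sum>l'\<in>{..<N} - {l}. f l') = 0"
    using assms(2) by (intro sum.neutral) auto
  finally show ?thesis by simp
qed

lemma prod_formula:
  assumes "pairwise_orth_nonzero us"
  shows "(slice (cube_sum us) k ** slice (cube_sum us) m) $ i $ j =
    (\<Sum>l<length us. us!l$i * us!l$k * us!l$j * us!l$m * bil (us!l) (us!l))"
proof -
  let ?a = "\<lambda>l. us ! l" and ?N = "length us"
  have "(slice (cube_sum us) k ** slice (cube_sum us) m) $ i $ j =
     (\<Sum>p\<in>UNIV. (\<Sum>l<?N. ?a l$i * ?a l$p * ?a l$k) * (\<Sum>l'<?N. ?a l'$p * ?a l'$j * ?a l'$m))"
    by (simp add: matrix_matrix_mult_def slice_def cube_sum_def)
  also have "\<dots> = (\<Sum>p\<in>UNIV. \<Sum>l<?N. \<Sum>l'<?N. (?a l$i * ?a l$k * ?a l'$j * ?a l'$m) * (?a l$p * ?a l'$p))"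
    unfolding sum_product by (intro sum.cong refl) (simp add: mult_ac)
  also have "\<dots> = (\<Sum>l<?N. \<Sum>l'<?N. \<Sum>p\<in>UNIV. (?a l$i * ?a l$k * ?a l'$j * ?a l'$m) * (?a l$p * ?a l'$p))"
    by (simp only: sum.swap[of _ UNIV "{..<?N}"])
  also have "\<dots> = (\<Sum>l<?N. \<Sum>l'<?N. (?a l$i * ?a l$k * ?a l'$j * ?a l'$m) * bil (?a l) (?a l'))"
    by (simp add: bil_def sum_distrib_left)
  also have "\<dots> = (\<Sum>l<?N. (?a l$i * ?a l$k * ?a l$j * ?a l$m) * bil (?a l) (?a l))"
  proof (rule sum.cong[OF refl])
    fix l assume "l \<in> {..<?N}"
    then show "(\<Sum>l'<?N. (?a l$i * ?a l$k * ?a l'$j * ?a l'$m) * bil (?a l) (?a l')) =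
       (?a l$i * ?a l$k * ?a l$j * ?a l$m) * bil (?a l) (?a l)"
      using assms unfolding pairwise_orth_nonzero_def
      by (intro collapse[where f="\<lambda>l'. (?a l$i * ?a l$k * ?a l'$j * ?a l'$m) * bil (?a l) (?a l')"]) auto
  qed
  finally show ?thesis by simp
qed

lemma contract:
  assumes "\<And>j. (\<Sum>l<N. c l * (a l :: complex^'n) $ j) = 0"
  shows "(\<Sum>l<N. c l * bil (a l) v) = 0"
proof -
  have "(\<Sum>l<N. c l * bil (a l) v) = (\<Sum>j\<in>UNIV. v $ j * (\<Sum>l<N. c l * a l $ j))"
    unfolding bil_def sum_distrib_left by (simp only: sum.swap[of _ UNIV "{..<N}"]) (intro sum.cong refl; simp add: mult_ac)
  also have "\<dots> = 0" using assms by simp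
  finally show ?thesis .
qed

lemma zero_imp_iso:
  assumes po: "pairwise_orth_nonzero us"
    and z: "\<forall>k l. slice (cube_sum us) k ** slice (cube_sum us) l = 0"
  shows "\<forall>u\<in>set us. isotropic u"
proof
  fix u assume "u \<in> set us"
  then obtain l0 where l0: "l0 < length us" "us ! l0 = u" by (auto simp: in_set_conv_nth)
  let ?a = "\<lambda>l. us ! l" and ?N = "length us"
  let ?q = "\<lambda>l. bil (?a l) (?a l)" and ?b = "\<lambda>l. bil (?a l) u"
  have T: "(\<Sum>l<?N. ?a l$i * ?a l$k * ?a l$j * ?a l$m * ?q l) = 0" for i j k m
    using prod_formula[OF po, of k m i j] z by simp
  have S1: "(\<Sum>l<?N. (?a l$i * ?a l$k * ?a l$m * ?q l) * ?b l) = 0" for i k m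
    by (rule contract) (use T[of i _ k m] in \<open>simp add: mult_ac\<close>)
  have S2: "(\<Sum>l<?N. (?a l$k * ?a l$m * ?q l * ?b l) * ?b l) = 0" for k m
    by (rule contract) (use S1[of _ k m] in \<open>simp add: mult_ac\<close>)
  have S3: "(\<Sum>l<?N. (?a l$m * ?q l * ?b l * ?b l) * ?b l) = 0" for m
    by (rule contract) (use S2[of _ m] in \<open>simp add: mult_ac\<close>)
  have S4: "(\<Sum>l<?N. (?q l * ?b l * ?b l * ?b l) * ?b l) = 0"
    by (rule contract) (use S3 in \<open>simp add: mult_ac\<close>)
  have "(\<Sum>l<?N. (?q l * ?b l * ?b l * ?b l) * ?b l) = (?q l0 * ?b l0 * ?b l0 * ?b l0) * ?b l0"
    using po l0 unfolding pairwise_orth_nonzero_def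
    by (intro collapse) auto
  with S4 have "?q l0 ^ 5 = 0" using l0 by (simp add: power_def eval_nat_numeral mult_ac)
  then have "bil u u = 0" using l0 by simp
  moreover have "u \<noteq> 0" using po l0 unfolding pairwise_orth_nonzero_def by auto
  ultimately show "isotropic u" by (simp add: isotropic_def)
qed

lemma iso_imp_zero:
  assumes po: "pairwise_orth_nonzero us" and i: "\<forall>u\<in>set us. isotropic u"
  shows "slice (cube_sum us) k ** slice (cube_sum us) m = 0"
proof -
  have "bil (us!l) (us!l) = 0" if "l < length us" for l
    using i that by (auto simp: isotropic_def)
  then show ?thesis
    by (simp add: vec_eq_iff prod_formula[OF po])
qed

theorem proposition28:
  fixes us :: "(complex ^ 'n) list"
  assumes "pairwise_orth_nonzero us"
  shows "(\<forall>k l. slice (cube_sum us) k ** slice (cube_sum us) l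
                 = slice (cube_sum us) l ** slice (cube_sum us) k)
     \<and> ((\<forall>u\<in>set us. isotropic u) \<longleftrightarrow>
          (\<forall>k l. slice (cube_sum us) k ** slice (cube_sum us) l = 0))
     \<and> ((\<forall>u\<in>set us. isotropic u) \<longrightarrow>
          (\<forall>vs :: (complex ^ 'n) list. pairwise_orth_nonzero vs \<and> cube_sum vs = cube_sum us
              \<longrightarrow> (\<forall>v\<in>set vs. isotropic v)))"
proof (intro conjI allI impI iffI)
  fix k l
  show "slice (cube_sum us) k ** slice (cube_sum us) l
                 = slice (cube_sum us) l ** slice (cube_sum us) k"
    by (simp add: vec_eq_iff prod_formula[OF assms] mult_ac)
next
  fix k l assume "\<forall>u\<in>set us. isotropic u"
  then show "slice (cube_sum us) k ** slice (cube_sum us) l = 0"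
    using iso_imp_zero[OF assms] by blast
next
  assume "\<forall>k l. slice (cube_sum us) k ** slice (cube_sum us) l = 0"
  then show "\<forall>u\<in>set us. isotropic u" using zero_imp_iso[OF assms] by blast
next
  fix vs :: "(complex ^ 'n) list"
  assume i: "\<forall>u\<in>set us. isotropic u" and v: "pairwise_orth_nonzero vs \<and> cube_sum vs = cube_sum us"
  then have "\<forall>k l. slice (cube_sum vs) k ** slice (cube_sum vs) l = 0"
    using iso_imp_zero[OF assms i] by simp
  then show "\<forall>v\<in>set vs. isotropic v" using zero_imp_iso v by blast
qed

end
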